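(* Let $G(\mathcal Y)$ be a developable complex of groups over a connected scwol $\mathcal Y$, let $T$ be a maximal tree in $\mathcal Y$, and identify each local group $G_\sigma$ with its image in $\pi_1(G(\mathcal Y),T)$ under $\iota_T$. Let $N_T$ be the kernel of the action homomorphism $\pi_1(G(\mathcal Y),T)\to\mathrm{Aut}(D(\mathcal Y,T))$. Then: (1) $N_T\le G_\sigma$ for every $\sigma\in V(\mathcal Y)$; (2) $\psi_a(N_T)=N_T$ for every $a\in E(\mathcal Y)$; (3) $N_T\trianglelefteq G_\sigma$ for every $\sigma\in V(\mathcal Y)$; (4) if $N'$ is any subgroup of $\pi_1(G(\mathcal Y),T)$ with $N'\le G_\sigma$ and $N'\trianglelefteq G_\sigma$ for every $\sigma\in V(\mathcal Y)$ and $\psi_a(N')=N'$ for every $a\in E(\mathcal Y)$, then $N'\le N_T$.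
   Context: Scwols. A scwol $\mathcal X$ consists of a set $V(\mathcal X)$ of vertices, a set $E(\mathcal X)$ of edges, maps $i,t:E(\mathcal X)\to V(\mathcal X)$, and a composition $(a,b)\mapsto ab\in E(\mathcal X)$ defined on $E^{(2)}(\mathcal X)=\{(a,b): i(a)=t(b)\}$, such that $i(ab)=i(b)$, $t(ab)=t(a)$, $(ab)c=a(bc)$ whenever defined, and $i(a)\neq t(a)$ for all $a$. For a vertex $\alpha$ put $i(\alpha)=t(\alpha)=\alpha$. The geometric realization $|\mathcal X|$ has one $k$-simplex for each sequence of $k$ composable edges; $\mathcal X$ is connected if $|\mathcal X|$ is. A maximal tree in $\mathcal X$ means a maximal tree in the 1-skeleton of $|\mathcal X|$. Complexes of groups. A complex of groups $G(\mathcal Y)=(G_\sigma,\psi_a,g_{a,b})$ over a scwol $\mathcal Y$ consists of groups $G_\sigma$ ($\sigma\in V(\mathcal Y)$), injective homomorphisms $\psi_a:G_{i(a)}\to G_{t(a)}$ ($a\in E(\mathcal Y)$) and elements $g_{a,b}\in G_{t(a)}$ ($(a,b)\in E^{(2)}(\mathcal Y)$) with $\mathrm{Ad}(g_{a,b})\psi_{ab}=\psi_a\psi_b$ and $\psi_a(g_{b,c})g_{a,bc}=g_{a,b}g_{ab,c}$. It is developable if it is isomorphic to the complex of groups associated to an action of a group on a scwol; for developable $G(\mathcal Y)$ over connected $\mathcal Y$, the maps $G_\sigma\to\pi_1(G(\mathcal Y),T)$ are injective. Fundamental group and universal cover. The universal group $FG(\mathcal Y)$ is generated by $\bigsqcup_\sigma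 G_\sigma$ and symbols $a^+,a^-$ ($a\in E(\mathcal Y)$) subject to: the relations of each $G_\sigma$; $(a^\pm)^{-1}=a^\mp$; $a^+b^+=g_{a,b}(ab)^+$ for $(a,b)\in E^{(2)}(\mathcal Y)$; $\psi_a(g)=a^+ga^-$ for $g\in G_{i(a)}$. For a maximal tree $T$ in $\mathcal Y$, $\pi_1(G(\mathcal Y),T)$ is the quotient of $FG(\mathcal Y)$ by the additional relations $a^+=1$ for $a$ in $T$; $\iota_T$ sends $g\in G_\sigma$ to its image and $a$ to the image of $a^+$. The universal cover $D(\mathcal Y,T)$ is the scwol with vertices $([g],\sigma)$, $\sigma\in V(\mathcal Y)$, $[g]\in \pi_1(G(\mathcal Y),T)/\iota_T(G_\sigma)$, edges $([g],a)$, $a\in E(\mathcal Y)$, $[g]\in\pi_1(G(\mathcal Y),T)/\iota_T(G_{i(a)})$, $i([g],a)=([g],i(a))$, $t([g],a)=([g\,\iota_T(a)^{-1}],t(a))$, and $([g],a)([h],b)=([h],ab)$ when $(a,b)\in E^{(2)}(\mathcal Y)$ and $g^{-1}h\,\iota_T(b)^{-1}\in\iota_T(G_{i(a)})$; $\pi_1(G(\mathcal Y),T)$ acts by $h\cdot([g],\alpha)=([hg],\alpha)$. *)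

theory Defs
  imports "HOL-Algebra.Algebra"
begin

record ('v, 'e) scwol =
  sV  :: "'v set"
  sE  :: "'e set"
  ini :: "'e \<Rightarrow> 'v"
  ter :: "'e \<Rightarrow> 'v"
  cmp :: "'e \<Rightarrow> 'e \<Rightarrow> 'e"

definition comp2 :: "('v, 'e) scwol \<Rightarrow> ('e \<times> 'e) set" where
  "comp2 W = {(a, b). a \<in> sE W \<and> b \<in> sE W \<and> ini W a = ter W b}"

definition scwol :: "('v, 'e) scwol \<Rightarrow> bool" where
  "scwol W \<longleftrightarrow>
     (\<forall>a \<in> sE W. ini W a \<in> sV W \<and> ter W a \<in> sV W \<and> ini W a \<noteq> ter W a) \<and>
     (\<forall>(a, b) \<in> comp2 W. cmp W a b \<in> sE W \<and>
        ini W (cmp W a b) = ini W b \<and> ter W (cmp W a b) = ter W a) \<and>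
     (\<forall>a b c. (a, b) \<in> comp2 W \<longrightarrow> (b, c) \<in> comp2 W \<longrightarrow>
        cmp W (cmp W a b) c = cmp W a (cmp W b c))"

text \<open>1-skeleton of the geometric realization: vertices sV, one (unoriented) edge per a.\<close>
definition edge_rel :: "('v, 'e) scwol \<Rightarrow> 'e set \<Rightarrow> ('v \<times> 'v) set" where
  "edge_rel W ES = {(ini W a, ter W a) | a. a \<in> ES} \<union> {(ter W a, ini W a) | a. a \<in> ES}"

definition graph_connected :: "('v, 'e) scwol \<Rightarrow> 'v set \<Rightarrow> 'e set \<Rightarrow> bool" where
  "graph_connected W VS ES \<longleftrightarrow>
     VS \<noteq> {} \<and> (\<forall>x \<in> VS. \<forall>y \<in> VS. (x, y) \<in> (edge_rel W ES)\<^sup>*)"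

text \<open>|W| is connected iff its 1-skeleton is connected.\<close>
definition scwol_connected :: "('v, 'e) scwol \<Rightarrow> bool" where
  "scwol_connected W \<longleftrightarrow> (\<forall>x \<in> sV W. \<forall>y \<in> sV W. (x, y) \<in> (edge_rel W (sE W))\<^sup>*)"

text \<open>A tree in the 1-skeleton: a connected subgraph in which every edge is a bridge.\<close>
definition is_subtree :: "('v, 'e) scwol \<Rightarrow> 'v set \<Rightarrow> 'e set \<Rightarrow> bool" where
  "is_subtree W VT T \<longleftrightarrow>
     VT \<subseteq> sV W \<and> T \<subseteq> sE W \<and> (\<forall>a \<in> T. ini W a \<in> VT \<and> ter W a \<in> VT) \<and>
     graph_connected W VT T \<and> (\<forall>a \<in> T. \<not> graph_connected W VT (T - {a}))"

definition maximal_tree :: "('v, 'e) scwol \<Rightarrow> 'e set \<Rightarrow> bool" where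
  "maximal_tree W T \<longleftrightarrow>
     (\<exists>VT. is_subtree W VT T \<and>
        \<not> (\<exists>VT' T'. is_subtree W VT' T' \<and> VT \<subseteq> VT' \<and> T \<subseteq> T' \<and> (VT, T) \<noteq> (VT', T')))"

record ('v, 'e, 'g) cog =
  grp   :: "'v \<Rightarrow> 'g monoid"
  psi   :: "'e \<Rightarrow> 'g \<Rightarrow> 'g"
  twist :: "'e \<Rightarrow> 'e \<Rightarrow> 'g"

definition complex_of_groups :: "('v, 'e) scwol \<Rightarrow> ('v, 'e, 'g) cog \<Rightarrow> bool" where
  "complex_of_groups Y C \<longleftrightarrow>
     scwol Y \<and>
     (\<forall>\<sigma> \<in> sV Y. group (grp C \<sigma>)) \<and>
     (\<forall>a \<in> sE Y. psi C a \<in> hom (grp C (ini Y a)) (grp C (ter Y a)) \<and>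
        inj_on (psi C a) (carrier (grp C (ini Y a)))) \<and>
     (\<forall>(a, b) \<in> comp2 Y. twist C a b \<in> carrier (grp C (ter Y a)) \<and>
        (\<forall>g \<in> carrier (grp C (ini Y b)).
           twist C a b \<otimes>\<^bsub>grp C (ter Y a)\<^esub> psi C (cmp Y a b) g
             \<otimes>\<^bsub>grp C (ter Y a)\<^esub> inv\<^bsub>grp C (ter Y a)\<^esub> (twist C a b)
           = psi C a (psi C b g))) \<and>
     (\<forall>a b c. (a, b) \<in> comp2 Y \<longrightarrow> (b, c) \<in> comp2 Y \<longrightarrow>
        psi C a (twist C b c) \<otimes>\<^bsub>grp C (ter Y a)\<^esub> twist C a (cmp Y b c)
        = twist C a b \<otimes>\<^bsub>grp C (ter Y a)\<^esub> twist C (cmp Y a b) c)"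

text \<open>Isomorphism of complexes of groups over the identity of Y
  (phi_sigma isomorphisms, elements phi(a) in H_{t(a)}).\<close>
definition cog_iso ::
  "('v, 'e) scwol \<Rightarrow> ('v, 'e, 'g) cog \<Rightarrow> ('v, 'e, 'h) cog \<Rightarrow>
   ('v \<Rightarrow> 'g \<Rightarrow> 'h) \<Rightarrow> ('e \<Rightarrow> 'h) \<Rightarrow> bool" where
  "cog_iso Y C D \<phi> \<phi>e \<longleftrightarrow>
     (\<forall>\<sigma> \<in> sV Y. \<phi> \<sigma> \<in> iso (grp C \<sigma>) (grp D \<sigma>)) \<and>
     (\<forall>a \<in> sE Y. \<phi>e a \<in> carrier (grp D (ter Y a)) \<and>
        (\<forall>g \<in> carrier (grp C (ini Y a)).
           \<phi>e a \<otimes>\<^bsub>grp D (ter Y a)\<^esub> psi D a (\<phi> (ini Y a) g)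
             \<otimes>\<^bsub>grp D (ter Y a)\<^esub> inv\<^bsub>grp D (ter Y a)\<^esub> (\<phi>e a)
           = \<phi> (ter Y a) (psi C a g))) \<and>
     (\<forall>(a, b) \<in> comp2 Y.
        \<phi> (ter Y a) (twist C a b) \<otimes>\<^bsub>grp D (ter Y a)\<^esub> \<phi>e (cmp Y a b)
        = \<phi>e a \<otimes>\<^bsub>grp D (ter Y a)\<^esub> psi D a (\<phi>e b)
            \<otimes>\<^bsub>grp D (ter Y a)\<^esub> twist D a b)"

section \<open>Group actions on scwols and the associated complex of groups\<close>

definition scwol_aut :: "('w, 'f) scwol \<Rightarrow> ('w \<Rightarrow> 'w) \<Rightarrow> ('f \<Rightarrow> 'f) \<Rightarrow> bool" where
  "scwol_aut W fV fE \<longleftrightarrow>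
     bij_betw fV (sV W) (sV W) \<and> bij_betw fE (sE W) (sE W) \<and>
     (\<forall>a \<in> sE W. ini W (fE a) = fV (ini W a) \<and> ter W (fE a) = fV (ter W a)) \<and>
     (\<forall>(a, b) \<in> comp2 W. fE (cmp W a b) = cmp W (fE a) (fE b))"

definition scwol_action ::
  "'x monoid \<Rightarrow> ('w, 'f) scwol \<Rightarrow> ('x \<Rightarrow> 'w \<Rightarrow> 'w) \<Rightarrow> ('x \<Rightarrow> 'f \<Rightarrow> 'f) \<Rightarrow> bool" where
  "scwol_action \<Gamma> W aV aE \<longleftrightarrow>
     group \<Gamma> \<and> scwol W \<and>
     (\<forall>\<gamma> \<in> carrier \<Gamma>. scwol_aut W (aV \<gamma>) (aE \<gamma>)) \<and>
     (\<forall>x \<in> sV W. aV \<one>\<^bsub>\<Gamma>\<^esub> x = x) \<and> (\<forall>a \<in> sE W. aE \<one>\<^bsub>\<Gamma>\<^esub> a = a) \<and>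
     (\<forall>\<gamma> \<in> carrier \<Gamma>. \<forall>\<delta> \<in> carrier \<Gamma>.
        (\<forall>x \<in> sV W. aV (\<gamma> \<otimes>\<^bsub>\<Gamma>\<^esub> \<delta>) x = aV \<gamma> (aV \<delta> x)) \<and>
        (\<forall>a \<in> sE W. aE (\<gamma> \<otimes>\<^bsub>\<Gamma>\<^esub> \<delta>) a = aE \<gamma> (aE \<delta> a))) \<and>
     (\<forall>\<gamma> \<in> carrier \<Gamma>. \<forall>a \<in> sE W. aV \<gamma> (ini W a) \<noteq> ter W a) \<and>
     (\<forall>\<gamma> \<in> carrier \<Gamma>. \<forall>a \<in> sE W. aV \<gamma> (ini W a) = ini W a \<longrightarrow> aE \<gamma> a = a)"

text \<open>(pV, pE) is the quotient map W -> Gamma\W followed by an isomorphism Gamma\W = Y.\<close>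
definition quotient_proj ::
  "'x monoid \<Rightarrow> ('w, 'f) scwol \<Rightarrow> ('x \<Rightarrow> 'w \<Rightarrow> 'w) \<Rightarrow> ('x \<Rightarrow> 'f \<Rightarrow> 'f) \<Rightarrow>
   ('v, 'e) scwol \<Rightarrow> ('w \<Rightarrow> 'v) \<Rightarrow> ('f \<Rightarrow> 'e) \<Rightarrow> bool" where
  "quotient_proj \<Gamma> W aV aE Y pV pE \<longleftrightarrow>
     pV ` sV W = sV Y \<and> pE ` sE W = sE Y \<and>
     (\<forall>a \<in> sE W. pV (ini W a) = ini Y (pE a) \<and> pV (ter W a) = ter Y (pE a)) \<and>
     (\<forall>(a, b) \<in> comp2 W. pE (cmp W a b) = cmp Y (pE a) (pE b)) \<and>
     (\<forall>x \<in> sV W. \<forall>y \<in> sV W. pV x = pV y \<longleftrightarrow> (\<exists>\<gamma> \<in> carrier \<Gamma>. aV \<gamma> x = y)) \<and>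
     (\<forall>a \<in> sE W. \<forall>b \<in> sE W. pE a = pE b \<longleftrightarrow> (\<exists>\<gamma> \<in> carrier \<Gamma>. aE \<gamma> a = b))"

definition lift_edge ::
  "('w, 'f) scwol \<Rightarrow> ('v, 'e) scwol \<Rightarrow> ('f \<Rightarrow> 'e) \<Rightarrow> ('v \<Rightarrow> 'w) \<Rightarrow> 'e \<Rightarrow> 'f" where
  "lift_edge W Y pE lift a = (THE e. e \<in> sE W \<and> ini W e = lift (ini Y a) \<and> pE e = a)"

definition assoc_cog ::
  "'x monoid \<Rightarrow> ('w, 'f) scwol \<Rightarrow> ('x \<Rightarrow> 'w \<Rightarrow> 'w) \<Rightarrow> ('v, 'e) scwol \<Rightarrow>
   ('v \<Rightarrow> 'w) \<Rightarrow> ('e \<Rightarrow> 'x) \<Rightarrow> ('v, 'e, 'x) cog" where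
  "assoc_cog \<Gamma> W aV Y lift h =
     \<lparr> grp = (\<lambda>\<sigma>. \<Gamma>\<lparr>carrier := {\<gamma> \<in> carrier \<Gamma>. aV \<gamma> (lift \<sigma>) = lift \<sigma>}\<rparr>),
       psi = (\<lambda>a \<gamma>. h a \<otimes>\<^bsub>\<Gamma>\<^esub> \<gamma> \<otimes>\<^bsub>\<Gamma>\<^esub> inv\<^bsub>\<Gamma>\<^esub> (h a)),
       twist = (\<lambda>a b. h a \<otimes>\<^bsub>\<Gamma>\<^esub> h b \<otimes>\<^bsub>\<Gamma>\<^esub> inv\<^bsub>\<Gamma>\<^esub> (h (cmp Y a b))) \<rparr>"

text \<open>G(Y) is isomorphic to the complex of groups associated to the action of Gamma on W
  (with Y identified with Gamma\W via (pV, pE)).\<close>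
definition developable_via ::
  "('v, 'e) scwol \<Rightarrow> ('v, 'e, 'g) cog \<Rightarrow> 'x monoid \<Rightarrow> ('w, 'f) scwol \<Rightarrow>
   ('x \<Rightarrow> 'w \<Rightarrow> 'w) \<Rightarrow> ('x \<Rightarrow> 'f \<Rightarrow> 'f) \<Rightarrow> ('w \<Rightarrow> 'v) \<Rightarrow> ('f \<Rightarrow> 'e) \<Rightarrow> bool" where
  "developable_via Y C \<Gamma> W aV aE pV pE \<longleftrightarrow>
     scwol_action \<Gamma> W aV aE \<and> quotient_proj \<Gamma> W aV aE Y pV pE \<and>
     (\<exists>lift h \<phi> \<phi>e.
        (\<forall>\<sigma> \<in> sV Y. lift \<sigma> \<in> sV W \<and> pV (lift \<sigma>) = \<sigma>) \<and>
        (\<forall>a \<in> sE Y. h a \<in> carrier \<Gamma> \<and>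
           aV (h a) (ter W (lift_edge W Y pE lift a)) = lift (ter Y a)) \<and>
        cog_iso Y C (assoc_cog \<Gamma> W aV Y lift h) \<phi> \<phi>e)"

section \<open>The fundamental group pi_1(G(Y),T) by generators and relations\<close>

datatype ('v, 'g, 'e) gen = GL 'v 'g | EP 'e | EM 'e

definition valid_gen :: "('v, 'e) scwol \<Rightarrow> ('v, 'e, 'g) cog \<Rightarrow> ('v, 'g, 'e) gen \<Rightarrow> bool" where
  "valid_gen Y C l = (case l of
      GL \<sigma> g \<Rightarrow> \<sigma> \<in> sV Y \<and> g \<in> carrier (grp C \<sigma>)
    | EP a \<Rightarrow> a \<in> sE Y
    | EM a \<Rightarrow> a \<in> sE Y)"

definition valid_word :: "('v, 'e) scwol \<Rightarrow> ('v, 'e, 'g) cog \<Rightarrow> ('v, 'g, 'e) gen list \<Rightarrow> bool" where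
  "valid_word Y C w \<longleftrightarrow> (\<forall>l \<in> set w. valid_gen Y C l)"

text \<open>Defining relations; K is the set of edges a with the extra relation a^+ = 1.\<close>
definition basic_rel ::
  "('v, 'e) scwol \<Rightarrow> ('v, 'e, 'g) cog \<Rightarrow> 'e set \<Rightarrow>
   (('v, 'g, 'e) gen list \<times> ('v, 'g, 'e) gen list) set" where
  "basic_rel Y C K =
     {([GL \<sigma> g, GL \<sigma> g'], [GL \<sigma> (g \<otimes>\<^bsub>grp C \<sigma>\<^esub> g')]) | \<sigma> g g'.
        \<sigma> \<in> sV Y \<and> g \<in> carrier (grp C \<sigma>) \<and> g' \<in> carrier (grp C \<sigma>)} \<union>
     {([GL \<sigma> \<one>\<^bsub>grp C \<sigma>\<^esub>], []) | \<sigma>. \<sigma> \<in> sV Y} \<union>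
     {([EP a, EM a], []) | a. a \<in> sE Y} \<union>
     {([EM a, EP a], []) | a. a \<in> sE Y} \<union>
     {([EP a, EP b], [GL (ter Y a) (twist C a b), EP (cmp Y a b)]) | a b. (a, b) \<in> comp2 Y} \<union>
     {([GL (ter Y a) (psi C a g)], [EP a, GL (ini Y a) g, EM a]) | a g.
        a \<in> sE Y \<and> g \<in> carrier (grp C (ini Y a))} \<union>
     {([EP a], []) | a. a \<in> K \<and> a \<in> sE Y}"

inductive pres_eq for Y :: "('v, 'e) scwol" and C :: "('v, 'e, 'g) cog" and K :: "'e set" where
  pe_refl: "valid_word Y C w \<Longrightarrow> pres_eq Y C K w w"
| pe_sym: "pres_eq Y C K w w' \<Longrightarrow> pres_eq Y C K w' w"
| pe_trans: "pres_eq Y C K w w' \<Longrightarrow> pres_eq Y C K w' w'' \<Longrightarrow> pres_eq Y C K w w''"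
| pe_rel: "(l, r) \<in> basic_rel Y C K \<Longrightarrow> valid_word Y C u \<Longrightarrow> valid_word Y C v \<Longrightarrow>
           pres_eq Y C K (u @ l @ v) (u @ r @ v)"

definition pres_class :: "('v, 'e) scwol \<Rightarrow> ('v, 'e, 'g) cog \<Rightarrow> 'e set \<Rightarrow>
    ('v, 'g, 'e) gen list \<Rightarrow> ('v, 'g, 'e) gen list set" where
  "pres_class Y C K w = {w'. pres_eq Y C K w w'}"

definition pres_group :: "('v, 'e) scwol \<Rightarrow> ('v, 'e, 'g) cog \<Rightarrow> 'e set \<Rightarrow>
    ('v, 'g, 'e) gen list set monoid" where
  "pres_group Y C K =
     \<lparr> carrier = pres_class Y C K ` {w. valid_word Y C w},
       monoid.mult = (\<lambda>A B. {w. \<exists>x \<in> A. \<exists>y \<in> B. pres_eq Y C K (x @ y) w}),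
       one = pres_class Y C K [] \<rparr>"

abbreviation FG :: "('v, 'e) scwol \<Rightarrow> ('v, 'e, 'g) cog \<Rightarrow> ('v, 'g, 'e) gen list set monoid" where
  "FG Y C \<equiv> pres_group Y C {}"

definition pi1 :: "('v, 'e) scwol \<Rightarrow> ('v, 'e, 'g) cog \<Rightarrow> 'e set \<Rightarrow>
    ('v, 'g, 'e) gen list set monoid" where
  "pi1 Y C T = pres_group Y C T"

definition iotaT :: "('v, 'e) scwol \<Rightarrow> ('v, 'e, 'g) cog \<Rightarrow> 'e set \<Rightarrow>
    'v \<Rightarrow> 'g \<Rightarrow> ('v, 'g, 'e) gen list set" where
  "iotaT Y C T \<sigma> g = pres_class Y C T [GL \<sigma> g]"

definition iotaT_edge :: "('v, 'e) scwol \<Rightarrow> ('v, 'e, 'g) cog \<Rightarrow> 'e set \<Rightarrow>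
    'e \<Rightarrow> ('v, 'g, 'e) gen list set" where
  "iotaT_edge Y C T a = pres_class Y C T [EP a]"

definition loc_grp :: "('v, 'e) scwol \<Rightarrow> ('v, 'e, 'g) cog \<Rightarrow> 'e set \<Rightarrow>
    'v \<Rightarrow> ('v, 'g, 'e) gen list set set" where
  "loc_grp Y C T \<sigma> = iotaT Y C T \<sigma> ` carrier (grp C \<sigma>)"

definition psi_img :: "('v, 'e) scwol \<Rightarrow> ('v, 'e, 'g) cog \<Rightarrow> 'e set \<Rightarrow> 'e \<Rightarrow>
    ('v, 'g, 'e) gen list set set \<Rightarrow> ('v, 'g, 'e) gen list set set" where
  "psi_img Y C T a N =
     {iotaT Y C T (ter Y a) (psi C a g) | g.
        g \<in> carrier (grp C (ini Y a)) \<and> iotaT Y C T (ini Y a) g \<in> N}"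

section \<open>The universal cover D(Y,T) and the kernel of the action\<close>

definition D_vertices :: "('v, 'e) scwol \<Rightarrow> ('v, 'e, 'g) cog \<Rightarrow> 'e set \<Rightarrow>
    (('v, 'g, 'e) gen list set set \<times> 'v) set" where
  "D_vertices Y C T =
     {(g <#\<^bsub>pi1 Y C T\<^esub> loc_grp Y C T \<sigma>, \<sigma>) | g \<sigma>. g \<in> carrier (pi1 Y C T) \<and> \<sigma> \<in> sV Y}"

definition D_edges :: "('v, 'e) scwol \<Rightarrow> ('v, 'e, 'g) cog \<Rightarrow> 'e set \<Rightarrow>
    (('v, 'g, 'e) gen list set set \<times> 'e) set" where
  "D_edges Y C T =
     {(g <#\<^bsub>pi1 Y C T\<^esub> loc_grp Y C T (ini Y a), a) | g a. g \<in> carrier (pi1 Y C T) \<and> a \<in> sE Y}"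

definition D_act :: "('v, 'e) scwol \<Rightarrow> ('v, 'e, 'g) cog \<Rightarrow> 'e set \<Rightarrow>
    ('v, 'g, 'e) gen list set \<Rightarrow> ('v, 'g, 'e) gen list set set \<times> 'z \<Rightarrow>
    ('v, 'g, 'e) gen list set set \<times> 'z" where
  "D_act Y C T h p = (h <#\<^bsub>pi1 Y C T\<^esub> fst p, snd p)"

definition action_kernel :: "('v, 'e) scwol \<Rightarrow> ('v, 'e, 'g) cog \<Rightarrow> 'e set \<Rightarrow>
    ('v, 'g, 'e) gen list set set" where
  "action_kernel Y C T =
     {h \<in> carrier (pi1 Y C T).
        (\<forall>p \<in> D_vertices Y C T. D_act Y C T h p = p) \<and>
        (\<forall>q \<in> D_edges Y C T. D_act Y C T h q = q)}"

end

theory Submission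
  imports Defs
begin


lemma cog_facts:
  assumes "complex_of_groups Y C"
  shows "scwol Y" "\<And>\<sigma>. \<sigma> \<in> sV Y \<Longrightarrow> group (grp C \<sigma>)"
    "\<And>a. a \<in> sE Y \<Longrightarrow> psi C a \<in> hom (grp C (ini Y a)) (grp C (ter Y a))"
    "\<And>a b. (a,b) \<in> comp2 Y \<Longrightarrow> twist C a b \<in> carrier (grp C (ter Y a))"
  using assms unfolding complex_of_groups_def by auto

lemma scwol_facts:
  assumes "scwol Y"
  shows "\<And>a. a \<in> sE Y \<Longrightarrow> ini Y a \<in> sV Y" "\<And>a. a \<in> sE Y \<Longrightarrow> ter Y a \<in> sV Y"
   "\<And>a b. (a,b) \<in> comp2 Y \<Longrightarrow> cmp Y a b \<in> sE Y"
  using assms unfolding scwol_def by auto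

lemma valid_word_simps[simp]:
  "valid_word Y C [] " "valid_word Y C (l # w) \<longleftrightarrow> valid_gen Y C l \<and> valid_word Y C w"
  "valid_word Y C (x @ y) \<longleftrightarrow> valid_word Y C x \<and> valid_word Y C y"
  unfolding valid_word_def by auto

lemma valid_gen_simps[simp]:
  "valid_gen Y C (GL \<sigma> g) \<longleftrightarrow> \<sigma> \<in> sV Y \<and> g \<in> carrier (grp C \<sigma>)"
  "valid_gen Y C (EP a) \<longleftrightarrow> a \<in> sE Y"
  "valid_gen Y C (EM a) \<longleftrightarrow> a \<in> sE Y"
  unfolding valid_gen_def by auto

lemma basic_rel_valid:
  assumes cog: "complex_of_groups Y C" and lr: "(l, r) \<in> basic_rel Y C K"
  shows "valid_word Y C l \<and> valid_word Y C r"
proof -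
  note cf = cog_facts[OF cog] scwol_facts[OF cog_facts(1)[OF cog]]
  have gm: "\<And>\<sigma> g g'. \<sigma> \<in> sV Y \<Longrightarrow> g \<in> carrier (grp C \<sigma>) \<Longrightarrow> g' \<in> carrier (grp C \<sigma>)
     \<Longrightarrow> g \<otimes>\<^bsub>grp C \<sigma>\<^esub> g' \<in> carrier (grp C \<sigma>)"
    by (rule monoid.m_closed[OF group.is_monoid[OF cf(2)]])
  have g1: "\<And>\<sigma>. \<sigma> \<in> sV Y \<Longrightarrow> \<one>\<^bsub>grp C \<sigma>\<^esub> \<in> carrier (grp C \<sigma>)"
    by (rule monoid.one_closed[OF group.is_monoid[OF cf(2)]])
  have ps: "\<And>a g. a \<in> sE Y \<Longrightarrow> g \<in> carrier (grp C (ini Y a)) \<Longrightarrow> psi C a g \<in> carrier (grp C (ter Y a))"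
    by (rule hom_in_carrier[OF cf(3)])
  have c2: "\<And>a b. (a,b) \<in> comp2 Y \<Longrightarrow> a \<in> sE Y \<and> b \<in> sE Y" unfolding comp2_def by auto
  show ?thesis using lr unfolding basic_rel_def
    by (auto simp: gm g1 ps cf c2)
qed

lemma pres_eq_valid:
  assumes cog: "complex_of_groups Y C"
  shows "pres_eq Y C K w w' \<Longrightarrow> valid_word Y C w \<and> valid_word Y C w'"
  by (induction rule: pres_eq.induct) (use basic_rel_valid[OF cog] in auto)

lemma pres_eq_app_right:
  assumes "pres_eq Y C K x x'" "valid_word Y C y"
  shows "pres_eq Y C K (x @ y) (x' @ y)"
  using assms
proof (induction rule: pres_eq.induct)
  case (pe_refl w) then show ?case by (simp add: pres_eq.pe_refl)
next
  case (pe_sym w w') then show ?case by (simp add: pres_eq.pe_sym)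
next
  case (pe_trans w w' w'') then show ?case by (meson pres_eq.pe_trans)
next
  case (pe_rel l r u v) then show ?case
    using pres_eq.pe_rel[of l r Y C K u "v @ y"] by simp
qed

lemma pres_eq_app_left:
  assumes "pres_eq Y C K x x'" "valid_word Y C y"
  shows "pres_eq Y C K (y @ x) (y @ x')"
  using assms
proof (induction rule: pres_eq.induct)
  case (pe_refl w) then show ?case by (simp add: pres_eq.pe_refl)
next
  case (pe_sym w w') then show ?case by (simp add: pres_eq.pe_sym)
next
  case (pe_trans w w' w'') then show ?case by (meson pres_eq.pe_trans)
next
  case (pe_rel l r u v) then show ?case
    using pres_eq.pe_rel[of l r Y C K "y @ u" v] by simp
qed

lemma pres_eq_app:
  assumes cog: "complex_of_groups Y C" and "pres_eq Y C K x x'" "pres_eq Y C K y y'"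
  shows "pres_eq Y C K (x @ y) (x' @ y')"
  using pres_eq_app_right[OF assms(2)] pres_eq_app_left[OF assms(3)]
    pres_eq_valid[OF cog assms(2)] pres_eq_valid[OF cog assms(3)] pres_eq.pe_trans by blast

lemma pres_eq_ctx:
  assumes cog: "complex_of_groups Y C" and "pres_eq Y C K x x'" "valid_word Y C u" "valid_word Y C v"
  shows "pres_eq Y C K (u @ x @ v) (u @ x' @ v)"
  using assms pres_eq_app_left pres_eq_app_right by blast

lemma pres_class_eq:
  assumes cog: "complex_of_groups Y C" and "pres_eq Y C K x y"
  shows "pres_class Y C K x = pres_class Y C K y"
  using assms unfolding pres_class_def by (auto intro: pres_eq.pe_trans pres_eq.pe_sym)

lemma pres_class_mem: "valid_word Y C x \<Longrightarrow> x \<in> pres_class Y C K x"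
  unfolding pres_class_def by (simp add: pres_eq.pe_refl)

lemma pres_mult:
  assumes cog: "complex_of_groups Y C" and "valid_word Y C x" "valid_word Y C y"
  shows "pres_class Y C K x \<otimes>\<^bsub>pres_group Y C K\<^esub> pres_class Y C K y = pres_class Y C K (x @ y)"
proof -
  have "\<And>w x0 y0. pres_eq Y C K x x0 \<Longrightarrow> pres_eq Y C K y y0 \<Longrightarrow> pres_eq Y C K (x0 @ y0) w
     \<Longrightarrow> pres_eq Y C K (x @ y) w"
    using pres_eq_app[OF cog] pres_eq.pe_trans by blast
  moreover have "pres_eq Y C K x x" "pres_eq Y C K y y" using assms by (auto intro: pres_eq.pe_refl)
  ultimately show ?thesis unfolding pres_group_def pres_class_def by auto
qed

fun linv :: "('v,'e,'g) cog \<Rightarrow> ('v,'g,'e) gen \<Rightarrow> ('v,'g,'e) gen" where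
  "linv C (GL \<sigma> g) = GL \<sigma> (inv\<^bsub>grp C \<sigma>\<^esub> g)"
| "linv C (EP a) = EM a"
| "linv C (EM a) = EP a"

definition winv where "winv C w = rev (map (linv C) w)"

lemma linv_valid:
  assumes cog: "complex_of_groups Y C" and "valid_gen Y C l"
  shows "valid_gen Y C (linv C l)"
  using assms by (cases l) (auto dest: cog_facts(2)[OF cog] intro: group.inv_closed)

lemma winv_valid:
  assumes cog: "complex_of_groups Y C" and "valid_word Y C w"
  shows "valid_word Y C (winv C w)"
  using assms linv_valid[OF cog] unfolding winv_def valid_word_def by auto

lemma linv_rel:
  assumes cog: "complex_of_groups Y C" and "valid_gen Y C l"
  shows "pres_eq Y C K [linv C l, l] []"
proof (cases l)
  case (GL \<sigma> g)
  then have s: "\<sigma> \<in> sV Y" "g \<in> carrier (grp C \<sigma>)" using assms by auto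
  then have gr: "group (grp C \<sigma>)" using cog_facts(2)[OF cog] by auto
  have 1: "pres_eq Y C K [GL \<sigma> (inv\<^bsub>grp C \<sigma>\<^esub> g), GL \<sigma> g] [GL \<sigma> (inv\<^bsub>grp C \<sigma>\<^esub> g \<otimes>\<^bsub>grp C \<sigma>\<^esub> g)]"
    using pres_eq.pe_rel[of "[GL \<sigma> (inv\<^bsub>grp C \<sigma>\<^esub> g), GL \<sigma> g]" "[GL \<sigma> (inv\<^bsub>grp C \<sigma>\<^esub> g \<otimes>\<^bsub>grp C \<sigma>\<^esub> g)]" Y C K "[]" "[]"]
    unfolding basic_rel_def using s gr group.inv_closed by fastforce
  have 2: "pres_eq Y C K [GL \<sigma> \<one>\<^bsub>grp C \<sigma>\<^esub>] []"
    using pres_eq.pe_rel[of "[GL \<sigma> \<one>\<^bsub>grp C \<sigma>\<^esub>]" "[]" Y C K "[]" "[]"]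
    unfolding basic_rel_def using s by fastforce
  show ?thesis using 1 2 GL s gr group.l_inv pres_eq.pe_trans by fastforce
next
  case (EP a)
  then show ?thesis
    using pres_eq.pe_rel[of "[EM a, EP a]" "[]" Y C K "[]" "[]"] assms unfolding basic_rel_def by auto
next
  case (EM a)
  then show ?thesis
    using pres_eq.pe_rel[of "[EP a, EM a]" "[]" Y C K "[]" "[]"] assms unfolding basic_rel_def by auto
qed

lemma winv_rel:
  assumes cog: "complex_of_groups Y C" and "valid_word Y C w"
  shows "pres_eq Y C K (winv C w @ w) []"
  using assms(2)
proof (induction w)
  case Nil then show ?case by (simp add: winv_def pres_eq.pe_refl)
next
  case (Cons l w)
  have v: "valid_word Y C (winv C w)" "valid_word Y C w" "valid_gen Y C l"
    using Cons.prems winv_valid[OF cog] by auto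
  have "winv C (l # w) @ l # w = winv C w @ [linv C l, l] @ w" by (simp add: winv_def)
  moreover have "pres_eq Y C K (winv C w @ [linv C l, l] @ w) (winv C w @ [] @ w)"
    using pres_eq_ctx[OF cog linv_rel[OF cog v(3)] v(1,2)] .
  ultimately show ?case using Cons pres_eq.pe_trans by fastforce
qed

lemma pres_group_group:
  assumes cog: "complex_of_groups Y C"
  shows "group (pres_group Y C K)"
proof (rule groupI)
  let ?G = "pres_group Y C K"
  have car: "carrier ?G = pres_class Y C K ` {w. valid_word Y C w}" unfolding pres_group_def by simp
  have one: "\<one>\<^bsub>?G\<^esub> = pres_class Y C K []" unfolding pres_group_def by simp
  show "\<And>x y. x \<in> carrier ?G \<Longrightarrow> y \<in> carrier ?G \<Longrightarrow> x \<otimes>\<^bsub>?G\<^esub> y \<in> carrier ?G"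
    using car pres_mult[OF cog] by fastforce
  show "\<one>\<^bsub>?G\<^esub> \<in> carrier ?G" using car one by auto
  show "\<And>x y z. x \<in> carrier ?G \<Longrightarrow> y \<in> carrier ?G \<Longrightarrow> z \<in> carrier ?G \<Longrightarrow>
      x \<otimes>\<^bsub>?G\<^esub> y \<otimes>\<^bsub>?G\<^esub> z = x \<otimes>\<^bsub>?G\<^esub> (y \<otimes>\<^bsub>?G\<^esub> z)"
    using car pres_mult[OF cog] by fastforce
  show "\<And>x. x \<in> carrier ?G \<Longrightarrow> \<one>\<^bsub>?G\<^esub> \<otimes>\<^bsub>?G\<^esub> x = x"
    using car one pres_mult[OF cog] by fastforce
  show "\<And>x. x \<in> carrier ?G \<Longrightarrow> \<exists>y\<in>carrier ?G. y \<otimes>\<^bsub>?G\<^esub> x = \<one>\<^bsub>?G\<^esub>"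
  proof -
    fix x assume "x \<in> carrier ?G"
    then obtain w where w: "valid_word Y C w" "x = pres_class Y C K w" using car by auto
    show "\<exists>y\<in>carrier ?G. y \<otimes>\<^bsub>?G\<^esub> x = \<one>\<^bsub>?G\<^esub>"
      apply (rule bexI[of _ "pres_class Y C K (winv C w)"])
      using w pres_mult[OF cog] winv_valid[OF cog] winv_rel[OF cog] pres_class_eq[OF cog] one car
      by auto
  qed
qed



lemma pi1_group: "complex_of_groups Y C \<Longrightarrow> group (pi1 Y C T)"
  unfolding pi1_def by (rule pres_group_group)

lemma pi1_carrier: "carrier (pi1 Y C T) = pres_class Y C T ` {w. valid_word Y C w}"
  unfolding pi1_def pres_group_def by simp

lemma pi1_one: "\<one>\<^bsub>pi1 Y C T\<^esub> = pres_class Y C T []"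
  unfolding pi1_def pres_group_def by simp

lemma pi1_mult:
  "complex_of_groups Y C \<Longrightarrow> valid_word Y C x \<Longrightarrow> valid_word Y C y \<Longrightarrow>
   pres_class Y C T x \<otimes>\<^bsub>pi1 Y C T\<^esub> pres_class Y C T y = pres_class Y C T (x @ y)"
  unfolding pi1_def by (rule pres_mult)

lemma cls_carrier: "valid_word Y C w \<Longrightarrow> pres_class Y C T w \<in> carrier (pi1 Y C T)"
  unfolding pi1_carrier by auto

lemma rel_cls:
  assumes cog: "complex_of_groups Y C" and "(l, r) \<in> basic_rel Y C T"
  shows "pres_class Y C T l = pres_class Y C T r"
  using pres_class_eq[OF cog] pres_eq.pe_rel[OF assms(2), of "[]" "[]"] by simp

lemma iota_hom:
  assumes cog: "complex_of_groups Y C" and s: "\<sigma> \<in> sV Y"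
  shows "iotaT Y C T \<sigma> \<in> hom (grp C \<sigma>) (pi1 Y C T)"
proof (rule homI)
  have gr: "group (grp C \<sigma>)" using cog_facts(2)[OF cog s] .
  show "\<And>x. x \<in> carrier (grp C \<sigma>) \<Longrightarrow> iotaT Y C T \<sigma> x \<in> carrier (pi1 Y C T)"
    unfolding iotaT_def using s by (auto intro: cls_carrier)
  fix x y assume xy: "x \<in> carrier (grp C \<sigma>)" "y \<in> carrier (grp C \<sigma>)"
  have "([GL \<sigma> x, GL \<sigma> y], [GL \<sigma> (x \<otimes>\<^bsub>grp C \<sigma>\<^esub> y)]) \<in> basic_rel Y C T"
    unfolding basic_rel_def using s xy by blast
  note br = this
  then show "iotaT Y C T \<sigma> (x \<otimes>\<^bsub>grp C \<sigma>\<^esub> y) = iotaT Y C T \<sigma> x \<otimes>\<^bsub>pi1 Y C T\<^esub> iotaT Y C T \<sigma> y"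
    unfolding iotaT_def using pi1_mult[OF cog, of "[GL \<sigma> x]" "[GL \<sigma> y]"] rel_cls[OF cog br] s xy by simp
qed

lemma loc_subgroup:
  assumes cog: "complex_of_groups Y C" and s: "\<sigma> \<in> sV Y"
  shows "subgroup (loc_grp Y C T \<sigma>) (pi1 Y C T)"
proof -
  have "group_hom (grp C \<sigma>) (pi1 Y C T) (iotaT Y C T \<sigma>)"
    using cog_facts(2)[OF cog s] pi1_group[OF cog] iota_hom[OF cog s]
    by (simp add: group_hom_def group_hom_axioms_def)
  then show ?thesis unfolding loc_grp_def by (rule group_hom.img_is_subgroup)
qed

lemma edge_carrier: "a \<in> sE Y \<Longrightarrow> iotaT_edge Y C T a \<in> carrier (pi1 Y C T)"
  unfolding iotaT_edge_def by (auto intro: cls_carrier)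

lemma edge_inv:
  assumes cog: "complex_of_groups Y C" and a: "a \<in> sE Y"
  shows "inv\<^bsub>pi1 Y C T\<^esub> (iotaT_edge Y C T a) = pres_class Y C T [EM a]"
proof -
  interpret G: group "pi1 Y C T" using pi1_group[OF cog] .
  have br: "([EM a, EP a], []) \<in> basic_rel Y C T" unfolding basic_rel_def using a by blast
  then have "pres_class Y C T [EM a] \<otimes>\<^bsub>pi1 Y C T\<^esub> iotaT_edge Y C T a = \<one>\<^bsub>pi1 Y C T\<^esub>"
    unfolding iotaT_edge_def pi1_one using pi1_mult[OF cog, of "[EM a]" "[EP a]"] rel_cls[OF cog br] a by simp
  moreover have "pres_class Y C T [EM a] \<in> carrier (pi1 Y C T)" by (rule cls_carrier) (simp add: a)
  ultimately show ?thesis using G.inv_equality edge_carrier[OF a] by blast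
qed

lemma edge_psi:
  assumes cog: "complex_of_groups Y C" and a: "a \<in> sE Y" and g: "g \<in> carrier (grp C (ini Y a))"
  shows "iotaT Y C T (ter Y a) (psi C a g) =
    iotaT_edge Y C T a \<otimes>\<^bsub>pi1 Y C T\<^esub> iotaT Y C T (ini Y a) g \<otimes>\<^bsub>pi1 Y C T\<^esub> inv\<^bsub>pi1 Y C T\<^esub> (iotaT_edge Y C T a)"
proof -
  have ia: "ini Y a \<in> sV Y" using scwol_facts(1)[OF cog_facts(1)[OF cog] a] .
  have "([GL (ter Y a) (psi C a g)], [EP a, GL (ini Y a) g, EM a]) \<in> basic_rel Y C T"
    unfolding basic_rel_def using a g by blast
  note br = this
  have 1: "pres_class Y C T [EP a] \<otimes>\<^bsub>pi1 Y C T\<^esub> pres_class Y C T [GL (ini Y a) g]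
     = pres_class Y C T [EP a, GL (ini Y a) g]"
    using pi1_mult[OF cog, of "[EP a]" "[GL (ini Y a) g]"] a g ia by simp
  have 2: "pres_class Y C T [EP a, GL (ini Y a) g] \<otimes>\<^bsub>pi1 Y C T\<^esub> pres_class Y C T [EM a]
     = pres_class Y C T [EP a, GL (ini Y a) g, EM a]"
    using pi1_mult[OF cog, of "[EP a, GL (ini Y a) g]" "[EM a]"] a g ia by simp
  show ?thesis unfolding edge_inv[OF cog a] unfolding iotaT_def iotaT_edge_def 1 2
    using rel_cls[OF cog br] by simp
qed

lemma gen_induct:
  assumes cog: "complex_of_groups Y C" and x: "x \<in> carrier (pi1 Y C T)"
    and one: "P \<one>\<^bsub>pi1 Y C T\<^esub>"
    and mult: "\<And>l y. valid_gen Y C l \<Longrightarrow> y \<in> carrier (pi1 Y C T) \<Longrightarrow> P y \<Longrightarrow>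
        P (pres_class Y C T [l] \<otimes>\<^bsub>pi1 Y C T\<^esub> y)"
  shows "P x"
proof -
  obtain w where w: "valid_word Y C w" "x = pres_class Y C T w" using x unfolding pi1_carrier by blast
  have "P (pres_class Y C T w)" using w(1)
  proof (induction w)
    case Nil then show ?case using one pi1_one by metis
  next
    case (Cons l w)
    then have "P (pres_class Y C T [l] \<otimes>\<^bsub>pi1 Y C T\<^esub> pres_class Y C T w)"
      using mult[of l "pres_class Y C T w"] Cons cls_carrier by auto
    then show ?case using pi1_mult[OF cog, of "[l]" w] Cons.prems by simp
  qed
  then show ?thesis using w by simp
qed



lemma (in group) conj_conj:
  assumes "a \<in> carrier G" "b \<in> carrier G" "c \<in> carrier G"
  shows "inv a \<otimes> (b \<otimes> c \<otimes> inv b) \<otimes> a = inv (inv b \<otimes> a) \<otimes> c \<otimes> (inv b \<otimes> a)"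
proof -
  have "inv (inv b \<otimes> a) = inv a \<otimes> b" using assms by (simp add: inv_mult_group)
  then show ?thesis using assms by (simp add: m_assoc)
qed

lemma (in group) conj_mult:
  assumes "a \<in> carrier G" "b \<in> carrier G" "c \<in> carrier G"
  shows "inv a \<otimes> (b \<otimes> c) \<otimes> a = (inv a \<otimes> b \<otimes> a) \<otimes> (inv a \<otimes> c \<otimes> a)"
proof -
  have "a \<otimes> (inv a \<otimes> (c \<otimes> a)) = c \<otimes> a" using assms by (simp add: m_assoc[symmetric])
  then show ?thesis using assms by (simp add: m_assoc)
qed

lemma (in group) conj_inv:
  assumes "a \<in> carrier G" "b \<in> carrier G"
  shows "inv a \<otimes> inv b \<otimes> a = inv (inv a \<otimes> b \<otimes> a)"
  using assms by (simp add: m_assoc inv_mult_group)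

lemma (in group) conj_prod:
  assumes "a \<in> carrier G" "b \<in> carrier G" "c \<in> carrier G"
  shows "(a \<otimes> b) \<otimes> c \<otimes> inv (a \<otimes> b) = a \<otimes> (b \<otimes> c \<otimes> inv b) \<otimes> inv a"
  using assms by (simp add: m_assoc inv_mult_group)

lemma (in group) coset_fix:
  assumes L: "subgroup L G" and g: "g \<in> carrier G" and h: "h \<in> carrier G"
  shows "(h <# (g <# L) = g <# L) \<longleftrightarrow> inv g \<otimes> h \<otimes> g \<in> L"
proof -
  have Lc: "L \<subseteq> carrier G" using L subgroup.subset by blast
  have e: "h <# (g <# L) = (h \<otimes> g) <# L" using lcos_m_assoc[OF Lc h g] .
  show ?thesis
  proof
    assume "h <# (g <# L) = g <# L"
    then have "(h \<otimes> g) <# L = g <# L" using e by simp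
    moreover have "h \<otimes> g \<in> (h \<otimes> g) <# L"
      unfolding l_coset_def using subgroup.one_closed[OF L] g h by force
    ultimately obtain l where l: "l \<in> L" "h \<otimes> g = g \<otimes> l" unfolding l_coset_def by auto
    have lc: "l \<in> carrier G" using l(1) Lc by blast
    have "inv g \<otimes> h \<otimes> g = inv g \<otimes> (h \<otimes> g)" by (simp add: m_assoc g h)
    also have "\<dots> = inv g \<otimes> (g \<otimes> l)" using l by simp
    also have "\<dots> = l" using g lc by (simp add: m_assoc[symmetric])
    finally have "inv g \<otimes> h \<otimes> g = l" .
    then show "inv g \<otimes> h \<otimes> g \<in> L" using l by simp
  next
    assume a: "inv g \<otimes> h \<otimes> g \<in> L"
    define l where "l = inv g \<otimes> h \<otimes> g"
    have hg: "h \<otimes> g = g \<otimes> l" unfolding l_def using g h by (simp add: m_assoc[symmetric])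
    have lL: "l \<in> L" using a l_def by simp
    have "l <# L = L"
    proof
      show "l <# L \<subseteq> L" unfolding l_coset_def using lL subgroup.m_closed[OF L] by auto
      show "L \<subseteq> l <# L"
      proof
        fix x assume x: "x \<in> L"
        have "x = l \<otimes> (inv l \<otimes> x)" using x lL Lc by (simp add: m_assoc[symmetric] subsetD)
        moreover have "inv l \<otimes> x \<in> L" using subgroup.m_closed[OF L] subgroup.m_inv_closed[OF L] lL x by blast
        ultimately show "x \<in> l <# L" unfolding l_coset_def by blast
      qed
    qed
    have lc: "l \<in> carrier G" using lL Lc by blast
    have "h <# (g <# L) = (g \<otimes> l) <# L" using e hg by simp
    also have "\<dots> = g <# (l <# L)" using lcos_m_assoc[OF Lc g lc] by simp
    also have "\<dots> = g <# L" using \<open>l <# L = L\<close> by simp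
    finally show "h <# (g <# L) = g <# L" .
  qed
qed

lemma V: "(\<forall>p\<in>D_vertices Y C T. D_act Y C T h p = p) \<longleftrightarrow>
     (\<forall>g\<in>carrier (pi1 Y C T). \<forall>\<sigma>\<in>sV Y. h <#\<^bsub>pi1 Y C T\<^esub> (g <#\<^bsub>pi1 Y C T\<^esub> loc_grp Y C T \<sigma>) = g <#\<^bsub>pi1 Y C T\<^esub> loc_grp Y C T \<sigma>)"
  unfolding D_vertices_def D_act_def Ball_def by (simp, blast)
lemma E: "(\<forall>p\<in>D_edges Y C T. D_act Y C T h p = p) \<longleftrightarrow>
     (\<forall>g\<in>carrier (pi1 Y C T). \<forall>a\<in>sE Y. h <#\<^bsub>pi1 Y C T\<^esub> (g <#\<^bsub>pi1 Y C T\<^esub> loc_grp Y C T (ini Y a)) = g <#\<^bsub>pi1 Y C T\<^esub> loc_grp Y C T (ini Y a))"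
  unfolding D_edges_def D_act_def Ball_def by (simp, blast)
lemma kernel_char:
  assumes cog: "complex_of_groups Y C"
  shows "action_kernel Y C T = {h \<in> carrier (pi1 Y C T). \<forall>g\<in>carrier (pi1 Y C T). \<forall>\<sigma>\<in>sV Y.
     inv\<^bsub>pi1 Y C T\<^esub> g \<otimes>\<^bsub>pi1 Y C T\<^esub> h \<otimes>\<^bsub>pi1 Y C T\<^esub> g \<in> loc_grp Y C T \<sigma>}"
proof -
  interpret G: group "pi1 Y C T" using pi1_group[OF cog] .
  have ia: "\<And>a. a \<in> sE Y \<Longrightarrow> ini Y a \<in> sV Y" using scwol_facts(1)[OF cog_facts(1)[OF cog]] .
  have cf: "(h <#\<^bsub>pi1 Y C T\<^esub> (g <#\<^bsub>pi1 Y C T\<^esub> loc_grp Y C T \<sigma>) = g <#\<^bsub>pi1 Y C T\<^esub> loc_grp Y C T \<sigma>) \<longleftrightarrow>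
     inv\<^bsub>pi1 Y C T\<^esub> g \<otimes>\<^bsub>pi1 Y C T\<^esub> h \<otimes>\<^bsub>pi1 Y C T\<^esub> g \<in> loc_grp Y C T \<sigma>"
    if "h \<in> carrier (pi1 Y C T)" "g \<in> carrier (pi1 Y C T)" "\<sigma> \<in> sV Y" for h g \<sigma>
    by (rule G.coset_fix[OF loc_subgroup[OF cog that(3)] that(2) that(1)])
  show ?thesis
  proof (rule Set.set_eqI)
    fix h
    show "h \<in> action_kernel Y C T \<longleftrightarrow> h \<in> {h \<in> carrier (pi1 Y C T). \<forall>g\<in>carrier (pi1 Y C T). \<forall>\<sigma>\<in>sV Y.
     inv\<^bsub>pi1 Y C T\<^esub> g \<otimes>\<^bsub>pi1 Y C T\<^esub> h \<otimes>\<^bsub>pi1 Y C T\<^esub> g \<in> loc_grp Y C T \<sigma>}"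
    proof (cases "h \<in> carrier (pi1 Y C T)")
      case True
      have "h \<in> action_kernel Y C T \<longleftrightarrow> (\<forall>p\<in>D_vertices Y C T. D_act Y C T h p = p) \<and>
         (\<forall>p\<in>D_edges Y C T. D_act Y C T h p = p)" unfolding action_kernel_def using True by blast
      note k = this
      have 1: "(\<forall>g\<in>carrier (pi1 Y C T). \<forall>\<sigma>\<in>sV Y. h <#\<^bsub>pi1 Y C T\<^esub> (g <#\<^bsub>pi1 Y C T\<^esub> loc_grp Y C T \<sigma>) = g <#\<^bsub>pi1 Y C T\<^esub> loc_grp Y C T \<sigma>)
        \<longleftrightarrow> (\<forall>g\<in>carrier (pi1 Y C T). \<forall>\<sigma>\<in>sV Y. inv\<^bsub>pi1 Y C T\<^esub> g \<otimes>\<^bsub>pi1 Y C T\<^esub> h \<otimes>\<^bsub>pi1 Y C T\<^esub> g \<in> loc_grp Y C T \<sigma>)"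
        apply (intro ball_cong[OF refl]) using cf[OF True] by blast
      have 2: "(\<forall>g\<in>carrier (pi1 Y C T). \<forall>\<sigma>\<in>sV Y. h <#\<^bsub>pi1 Y C T\<^esub> (g <#\<^bsub>pi1 Y C T\<^esub> loc_grp Y C T \<sigma>) = g <#\<^bsub>pi1 Y C T\<^esub> loc_grp Y C T \<sigma>)
        \<Longrightarrow> (\<forall>g\<in>carrier (pi1 Y C T). \<forall>a\<in>sE Y. h <#\<^bsub>pi1 Y C T\<^esub> (g <#\<^bsub>pi1 Y C T\<^esub> loc_grp Y C T (ini Y a)) = g <#\<^bsub>pi1 Y C T\<^esub> loc_grp Y C T (ini Y a))"
      proof (intro ballI)
        fix g a assume as: "\<forall>g\<in>carrier (pi1 Y C T). \<forall>\<sigma>\<in>sV Y. h <#\<^bsub>pi1 Y C T\<^esub> (g <#\<^bsub>pi1 Y C T\<^esub> loc_grp Y C T \<sigma>) = g <#\<^bsub>pi1 Y C T\<^esub> loc_grp Y C T \<sigma>"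
          "g \<in> carrier (pi1 Y C T)" "a \<in> sE Y"
        show "h <#\<^bsub>pi1 Y C T\<^esub> (g <#\<^bsub>pi1 Y C T\<^esub> loc_grp Y C T (ini Y a)) = g <#\<^bsub>pi1 Y C T\<^esub> loc_grp Y C T (ini Y a)"
          using as(1) as(2) ia[OF as(3)] by blast
      qed
      show ?thesis unfolding k V E mem_Collect_eq using 1 2 True by blast
    next
      case False
      then show ?thesis unfolding action_kernel_def by blast
    qed
  qed
qed



lemma (in group) conj_cancel1:
  assumes "e \<in> carrier G" "m \<in> carrier G"
  shows "inv e \<otimes> (e \<otimes> m \<otimes> inv e) \<otimes> inv (inv e) = m"
  using assms by (simp add: m_assoc[symmetric]) (simp add: m_assoc)

lemma (in group) conj_cancel2:
  assumes "e \<in> carrier G" "m \<in> carrier G"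
  shows "e \<otimes> (inv e \<otimes> m \<otimes> e) \<otimes> inv e = m"
  using assms by (simp add: m_assoc[symmetric]) (simp add: m_assoc)

lemma (in group) conj_one:
  assumes "m \<in> carrier G"
  shows "\<one> \<otimes> m \<otimes> inv \<one> = m" "inv \<one> \<otimes> m \<otimes> \<one> = m"
  using assms by simp_all

lemma (in group) conj_one2:
  assumes "g \<in> carrier G"
  shows "inv g \<otimes> \<one> \<otimes> g = \<one>"
  using assms by simp

lemma (in group) normal_sub_I:
  assumes H: "subgroup H G" and N: "subgroup N G" and NH: "N \<subseteq> H"
    and c: "\<And>x n. x \<in> H \<Longrightarrow> n \<in> N \<Longrightarrow> x \<otimes> n \<otimes> inv x \<in> N"
  shows "N \<lhd> G\<lparr>carrier := H\<rparr>"
proof -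
  have gH: "group (G\<lparr>carrier := H\<rparr>)" using subgroup.subgroup_is_group[OF H is_group] .
  have sN: "subgroup N (G\<lparr>carrier := H\<rparr>)" using subgroup_incl[OF N H NH] .
  show ?thesis
    unfolding group.normal_inv_iff[OF gH]
    using sN c m_inv_consistent[OF H] by simp
qed

lemma (in group) normal_sub_D:
  assumes H: "subgroup H G" and N: "N \<lhd> G\<lparr>carrier := H\<rparr>" and x: "x \<in> H" and n: "n \<in> N"
  shows "x \<otimes> n \<otimes> inv x \<in> N"
proof -
  have "x \<otimes>\<^bsub>G\<lparr>carrier := H\<rparr>\<^esub> n \<otimes>\<^bsub>G\<lparr>carrier := H\<rparr>\<^esub> inv\<^bsub>G\<lparr>carrier := H\<rparr>\<^esub> x \<in> N"
    using normal.inv_op_closed2[OF N] x n by simp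
  then show ?thesis using m_inv_consistent[OF H x] by simp
qed

theorem mainTheorem3:
  fixes Y :: "('v, 'e) scwol" and C :: "('v, 'e, 'g) cog" and T :: "'e set"
    and \<Gamma> :: "'x monoid" and W :: "('w, 'f) scwol"
    and aV :: "'x \<Rightarrow> 'w \<Rightarrow> 'w" and aE :: "'x \<Rightarrow> 'f \<Rightarrow> 'f"
    and pV :: "'w \<Rightarrow> 'v" and pE :: "'f \<Rightarrow> 'e"
  assumes cog: "complex_of_groups Y C"
    and dev: "developable_via Y C \<Gamma> W aV aE pV pE"
    and conn: "scwol_connected Y"
    and tree: "maximal_tree Y T"
  shows "(\<forall>\<sigma> \<in> sV Y. action_kernel Y C T \<subseteq> loc_grp Y C T \<sigma>)
       \<and> (\<forall>a \<in> sE Y. psi_img Y C T a (action_kernel Y C T) = action_kernel Y C T)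
       \<and> (\<forall>\<sigma> \<in> sV Y. action_kernel Y C T \<lhd> (pi1 Y C T)\<lparr>carrier := loc_grp Y C T \<sigma>\<rparr>)
       \<and> (\<forall>N'. subgroup N' (pi1 Y C T) \<and>
              (\<forall>\<sigma> \<in> sV Y. N' \<subseteq> loc_grp Y C T \<sigma>) \<and>
              (\<forall>\<sigma> \<in> sV Y. N' \<lhd> (pi1 Y C T)\<lparr>carrier := loc_grp Y C T \<sigma>\<rparr>) \<and>
              (\<forall>a \<in> sE Y. psi_img Y C T a N' = N')
            \<longrightarrow> N' \<subseteq> action_kernel Y C T)"
proof -
  interpret G: group "pi1 Y C T" using pi1_group[OF cog] .
  let ?N = "action_kernel Y C T"
  let ?L = "loc_grp Y C T"
  have ia: "\<And>a. a \<in> sE Y \<Longrightarrow> ini Y a \<in> sV Y" using scwol_facts(1)[OF cog_facts(1)[OF cog]] .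
  have ta: "\<And>a. a \<in> sE Y \<Longrightarrow> ter Y a \<in> sV Y" using scwol_facts(2)[OF cog_facts(1)[OF cog]] .
  have Lsub: "\<And>\<sigma>. \<sigma> \<in> sV Y \<Longrightarrow> subgroup (?L \<sigma>) (pi1 Y C T)" using loc_subgroup[OF cog] .
  have Nmem: "h \<in> ?N \<longleftrightarrow> h \<in> carrier (pi1 Y C T) \<and> (\<forall>g\<in>carrier (pi1 Y C T). \<forall>\<sigma>\<in>sV Y.
     inv\<^bsub>pi1 Y C T\<^esub> g \<otimes>\<^bsub>pi1 Y C T\<^esub> h \<otimes>\<^bsub>pi1 Y C T\<^esub> g \<in> ?L \<sigma>)" for h
    unfolding kernel_char[OF cog] by blast
  have NL: "?N \<subseteq> ?L \<sigma>" if s: "\<sigma> \<in> sV Y" for \<sigma>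
  proof
    fix h assume "h \<in> ?N"
    then have "h \<in> carrier (pi1 Y C T)" "inv\<^bsub>pi1 Y C T\<^esub> \<one>\<^bsub>pi1 Y C T\<^esub> \<otimes>\<^bsub>pi1 Y C T\<^esub> h \<otimes>\<^bsub>pi1 Y C T\<^esub> \<one>\<^bsub>pi1 Y C T\<^esub> \<in> ?L \<sigma>"
      using Nmem s by auto
    then show "h \<in> ?L \<sigma>" using G.conj_one(2) by simp
  qed
  have Nsub: "subgroup ?N (pi1 Y C T)"
  proof (rule G.subgroupI)
    show "?N \<subseteq> carrier (pi1 Y C T)" using Nmem by blast
    have "\<one>\<^bsub>pi1 Y C T\<^esub> \<in> ?N" unfolding Nmem
      using G.conj_one2 subgroup.one_closed[OF Lsub] by simp
    then show "?N \<noteq> {}" by blast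
    fix a b assume a: "a \<in> ?N" and b: "b \<in> ?N"
    show "inv\<^bsub>pi1 Y C T\<^esub> a \<in> ?N" unfolding Nmem
    proof (intro conjI ballI)
      show "inv\<^bsub>pi1 Y C T\<^esub> a \<in> carrier (pi1 Y C T)" using a Nmem by blast
      fix g \<sigma> assume g: "g \<in> carrier (pi1 Y C T)" and s: "\<sigma> \<in> sV Y"
      have "inv\<^bsub>pi1 Y C T\<^esub> g \<otimes>\<^bsub>pi1 Y C T\<^esub> a \<otimes>\<^bsub>pi1 Y C T\<^esub> g \<in> ?L \<sigma>" using a g s Nmem by blast
      then show "inv\<^bsub>pi1 Y C T\<^esub> g \<otimes>\<^bsub>pi1 Y C T\<^esub> inv\<^bsub>pi1 Y C T\<^esub> a \<otimes>\<^bsub>pi1 Y C T\<^esub> g \<in> ?L \<sigma>"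
        using G.conj_inv[OF g] a Nmem subgroup.m_inv_closed[OF Lsub[OF s]] by simp
    qed
    show "a \<otimes>\<^bsub>pi1 Y C T\<^esub> b \<in> ?N" unfolding Nmem
    proof (intro conjI ballI)
      show "a \<otimes>\<^bsub>pi1 Y C T\<^esub> b \<in> carrier (pi1 Y C T)" using a b Nmem by blast
      fix g \<sigma> assume g: "g \<in> carrier (pi1 Y C T)" and s: "\<sigma> \<in> sV Y"
      have "inv\<^bsub>pi1 Y C T\<^esub> g \<otimes>\<^bsub>pi1 Y C T\<^esub> a \<otimes>\<^bsub>pi1 Y C T\<^esub> g \<in> ?L \<sigma>"
        "inv\<^bsub>pi1 Y C T\<^esub> g \<otimes>\<^bsub>pi1 Y C T\<^esub> b \<otimes>\<^bsub>pi1 Y C T\<^esub> g \<in> ?L \<sigma>" using a b g s Nmem by blast+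
      then show "inv\<^bsub>pi1 Y C T\<^esub> g \<otimes>\<^bsub>pi1 Y C T\<^esub> (a \<otimes>\<^bsub>pi1 Y C T\<^esub> b) \<otimes>\<^bsub>pi1 Y C T\<^esub> g \<in> ?L \<sigma>"
        using G.conj_mult[OF g] a b Nmem subgroup.m_closed[OF Lsub[OF s]] by simp
    qed
  qed
  have Nnorm: "x \<otimes>\<^bsub>pi1 Y C T\<^esub> h \<otimes>\<^bsub>pi1 Y C T\<^esub> inv\<^bsub>pi1 Y C T\<^esub> x \<in> ?N"
    if x: "x \<in> carrier (pi1 Y C T)" and h: "h \<in> ?N" for x h
    unfolding Nmem
  proof (intro conjI ballI)
    have hc: "h \<in> carrier (pi1 Y C T)" using h Nmem by blast
    show "x \<otimes>\<^bsub>pi1 Y C T\<^esub> h \<otimes>\<^bsub>pi1 Y C T\<^esub> inv\<^bsub>pi1 Y C T\<^esub> x \<in> carrier (pi1 Y C T)"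
      using x hc by simp
    fix g \<sigma> assume g: "g \<in> carrier (pi1 Y C T)" and s: "\<sigma> \<in> sV Y"
    have "inv\<^bsub>pi1 Y C T\<^esub> (inv\<^bsub>pi1 Y C T\<^esub> x \<otimes>\<^bsub>pi1 Y C T\<^esub> g) \<otimes>\<^bsub>pi1 Y C T\<^esub> h \<otimes>\<^bsub>pi1 Y C T\<^esub>
       (inv\<^bsub>pi1 Y C T\<^esub> x \<otimes>\<^bsub>pi1 Y C T\<^esub> g) \<in> ?L \<sigma>"
      using h Nmem x g s by simp
    then show "inv\<^bsub>pi1 Y C T\<^esub> g \<otimes>\<^bsub>pi1 Y C T\<^esub> (x \<otimes>\<^bsub>pi1 Y C T\<^esub> h \<otimes>\<^bsub>pi1 Y C T\<^esub> inv\<^bsub>pi1 Y C T\<^esub> x)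
       \<otimes>\<^bsub>pi1 Y C T\<^esub> g \<in> ?L \<sigma>"
      using G.conj_conj[OF g x hc] by simp
  qed
  have P1: "\<forall>\<sigma> \<in> sV Y. ?N \<subseteq> ?L \<sigma>" using NL by blast
  have P3: "\<forall>\<sigma> \<in> sV Y. ?N \<lhd> (pi1 Y C T)\<lparr>carrier := ?L \<sigma>\<rparr>"
  proof
    fix \<sigma> assume s: "\<sigma> \<in> sV Y"
    show "?N \<lhd> (pi1 Y C T)\<lparr>carrier := ?L \<sigma>\<rparr>"
    proof (rule G.normal_sub_I[OF Lsub[OF s] Nsub NL[OF s]])
      fix x n assume "x \<in> ?L \<sigma>" "n \<in> ?N"
      then show "x \<otimes>\<^bsub>pi1 Y C T\<^esub> n \<otimes>\<^bsub>pi1 Y C T\<^esub> inv\<^bsub>pi1 Y C T\<^esub> x \<in> ?N"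
        using Nnorm subgroup.subset[OF Lsub[OF s]] by blast
    qed
  qed
  have P2: "\<forall>a \<in> sE Y. psi_img Y C T a ?N = ?N"
  proof
    fix a assume a: "a \<in> sE Y"
    let ?e = "iotaT_edge Y C T a"
    have ec: "?e \<in> carrier (pi1 Y C T)" using edge_carrier[OF a] .
    show "psi_img Y C T a ?N = ?N"
    proof
      show "psi_img Y C T a ?N \<subseteq> ?N"
      proof
        fix x assume "x \<in> psi_img Y C T a ?N"
        then obtain g where g: "g \<in> carrier (grp C (ini Y a))" "iotaT Y C T (ini Y a) g \<in> ?N"
          and x: "x = iotaT Y C T (ter Y a) (psi C a g)" unfolding psi_img_def by blast
        show "x \<in> ?N" unfolding x edge_psi[OF cog a g(1)] using Nnorm[OF ec g(2)] .
      qed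
      show "?N \<subseteq> psi_img Y C T a ?N"
      proof
        fix n assume n: "n \<in> ?N"
        have nc: "n \<in> carrier (pi1 Y C T)" using n Nmem by blast
        have m: "inv\<^bsub>pi1 Y C T\<^esub> ?e \<otimes>\<^bsub>pi1 Y C T\<^esub> n \<otimes>\<^bsub>pi1 Y C T\<^esub> inv\<^bsub>pi1 Y C T\<^esub> (inv\<^bsub>pi1 Y C T\<^esub> ?e) \<in> ?N"
          using Nnorm[OF G.inv_closed[OF ec] n] .
        then have m': "inv\<^bsub>pi1 Y C T\<^esub> ?e \<otimes>\<^bsub>pi1 Y C T\<^esub> n \<otimes>\<^bsub>pi1 Y C T\<^esub> ?e \<in> ?N" using ec by simp
        then have "inv\<^bsub>pi1 Y C T\<^esub> ?e \<otimes>\<^bsub>pi1 Y C T\<^esub> n \<otimes>\<^bsub>pi1 Y C T\<^esub> ?e \<in> ?L (ini Y a)" using NL[OF ia[OF a]] by blast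
        then obtain g where g: "g \<in> carrier (grp C (ini Y a))"
          "inv\<^bsub>pi1 Y C T\<^esub> ?e \<otimes>\<^bsub>pi1 Y C T\<^esub> n \<otimes>\<^bsub>pi1 Y C T\<^esub> ?e = iotaT Y C T (ini Y a) g"
          unfolding loc_grp_def by auto
        have "iotaT Y C T (ter Y a) (psi C a g) = n"
          unfolding edge_psi[OF cog a g(1)] g(2)[symmetric] using G.conj_cancel2[OF ec nc] .
        then show "n \<in> psi_img Y C T a ?N" unfolding psi_img_def using g m' by force
      qed
    qed
  qed
  have P4: "N' \<subseteq> ?N" if hyp: "subgroup N' (pi1 Y C T) \<and>
              (\<forall>\<sigma> \<in> sV Y. N' \<subseteq> ?L \<sigma>) \<and>
              (\<forall>\<sigma> \<in> sV Y. N' \<lhd> (pi1 Y C T)\<lparr>carrier := ?L \<sigma>\<rparr>) \<and>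
              (\<forall>a \<in> sE Y. psi_img Y C T a N' = N')" for N'
  proof -
    have sN: "subgroup N' (pi1 Y C T)" and NL': "\<And>\<sigma>. \<sigma> \<in> sV Y \<Longrightarrow> N' \<subseteq> ?L \<sigma>"
      and nN: "\<And>\<sigma>. \<sigma> \<in> sV Y \<Longrightarrow> N' \<lhd> (pi1 Y C T)\<lparr>carrier := ?L \<sigma>\<rparr>"
      and pN: "\<And>a. a \<in> sE Y \<Longrightarrow> psi_img Y C T a N' = N'" using hyp by auto
    have Nc: "N' \<subseteq> carrier (pi1 Y C T)" using subgroup.subset[OF sN] .
    have let_: "\<forall>n\<in>N'. pres_class Y C T [l] \<otimes>\<^bsub>pi1 Y C T\<^esub> n \<otimes>\<^bsub>pi1 Y C T\<^esub> inv\<^bsub>pi1 Y C T\<^esub> (pres_class Y C T [l]) \<in> N'"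
      if l: "valid_gen Y C l" for l
    proof (cases l)
      case (GL \<sigma> g)
      then have s: "\<sigma> \<in> sV Y" and g: "g \<in> carrier (grp C \<sigma>)" using l by auto
      have "pres_class Y C T [l] \<in> ?L \<sigma>" unfolding GL loc_grp_def iotaT_def using g by blast
      then show ?thesis using G.normal_sub_D[OF Lsub[OF s] nN[OF s]] by blast
    next
      case (EP a)
      then have a: "a \<in> sE Y" using l by auto
      have c: "pres_class Y C T [l] = iotaT_edge Y C T a" unfolding EP iotaT_edge_def ..
      show ?thesis unfolding c
      proof
        fix n assume n: "n \<in> N'"
        then have "n \<in> ?L (ini Y a)" using NL' ia[OF a] by blast
        then obtain g where g: "g \<in> carrier (grp C (ini Y a))" "n = iotaT Y C T (ini Y a) g"
          unfolding loc_grp_def by auto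
        have "iotaT Y C T (ter Y a) (psi C a g) \<in> psi_img Y C T a N'"
          unfolding psi_img_def using g n by blast
        then show "iotaT_edge Y C T a \<otimes>\<^bsub>pi1 Y C T\<^esub> n \<otimes>\<^bsub>pi1 Y C T\<^esub> inv\<^bsub>pi1 Y C T\<^esub> iotaT_edge Y C T a \<in> N'"
          using pN[OF a] edge_psi[OF cog a g(1)] g(2) by simp
      qed
    next
      case (EM a)
      then have a: "a \<in> sE Y" using l by auto
      let ?e = "iotaT_edge Y C T a"
      have ec: "?e \<in> carrier (pi1 Y C T)" using edge_carrier[OF a] .
      have c: "pres_class Y C T [l] = inv\<^bsub>pi1 Y C T\<^esub> ?e" unfolding EM edge_inv[OF cog a] ..
      show ?thesis unfolding c
      proof
        fix n assume n: "n \<in> N'"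
        then have "n \<in> psi_img Y C T a N'" using pN[OF a] by simp
        then obtain g where g: "g \<in> carrier (grp C (ini Y a))" "iotaT Y C T (ini Y a) g \<in> N'"
          and nx: "n = iotaT Y C T (ter Y a) (psi C a g)" unfolding psi_img_def by blast
        have mc: "iotaT Y C T (ini Y a) g \<in> carrier (pi1 Y C T)" using g(2) Nc by blast
        show "inv\<^bsub>pi1 Y C T\<^esub> ?e \<otimes>\<^bsub>pi1 Y C T\<^esub> n \<otimes>\<^bsub>pi1 Y C T\<^esub> inv\<^bsub>pi1 Y C T\<^esub> (inv\<^bsub>pi1 Y C T\<^esub> ?e) \<in> N'"
          unfolding nx edge_psi[OF cog a g(1)] G.conj_cancel1[OF ec mc] using g(2) .
      qed
    qed
    have all: "\<forall>n\<in>N'. x \<otimes>\<^bsub>pi1 Y C T\<^esub> n \<otimes>\<^bsub>pi1 Y C T\<^esub> inv\<^bsub>pi1 Y C T\<^esub> x \<in> N'"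
      if x: "x \<in> carrier (pi1 Y C T)" for x
      using cog x
    proof (rule gen_induct[where P = "\<lambda>x. \<forall>n\<in>N'. x \<otimes>\<^bsub>pi1 Y C T\<^esub> n \<otimes>\<^bsub>pi1 Y C T\<^esub> inv\<^bsub>pi1 Y C T\<^esub> x \<in> N'"])
      show "\<forall>n\<in>N'. \<one>\<^bsub>pi1 Y C T\<^esub> \<otimes>\<^bsub>pi1 Y C T\<^esub> n \<otimes>\<^bsub>pi1 Y C T\<^esub> inv\<^bsub>pi1 Y C T\<^esub> \<one>\<^bsub>pi1 Y C T\<^esub> \<in> N'"
        using Nc G.conj_one(1) by (simp add: subset_iff)
      fix l y assume l: "valid_gen Y C l" and y: "y \<in> carrier (pi1 Y C T)"
        and IH: "\<forall>n\<in>N'. y \<otimes>\<^bsub>pi1 Y C T\<^esub> n \<otimes>\<^bsub>pi1 Y C T\<^esub> inv\<^bsub>pi1 Y C T\<^esub> y \<in> N'"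
      have cc: "pres_class Y C T [l] \<in> carrier (pi1 Y C T)" by (rule cls_carrier) (simp add: l)
      show "\<forall>n\<in>N'. pres_class Y C T [l] \<otimes>\<^bsub>pi1 Y C T\<^esub> y \<otimes>\<^bsub>pi1 Y C T\<^esub> n \<otimes>\<^bsub>pi1 Y C T\<^esub>
          inv\<^bsub>pi1 Y C T\<^esub> (pres_class Y C T [l] \<otimes>\<^bsub>pi1 Y C T\<^esub> y) \<in> N'"
      proof
        fix n assume n: "n \<in> N'"
        have nc: "n \<in> carrier (pi1 Y C T)" using n Nc by blast
        have "y \<otimes>\<^bsub>pi1 Y C T\<^esub> n \<otimes>\<^bsub>pi1 Y C T\<^esub> inv\<^bsub>pi1 Y C T\<^esub> y \<in> N'" using IH n by blast
        then have "pres_class Y C T [l] \<otimes>\<^bsub>pi1 Y C T\<^esub> (y \<otimes>\<^bsub>pi1 Y C T\<^esub> n \<otimes>\<^bsub>pi1 Y C T\<^esub> inv\<^bsub>pi1 Y C T\<^esub> y)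
            \<otimes>\<^bsub>pi1 Y C T\<^esub> inv\<^bsub>pi1 Y C T\<^esub> (pres_class Y C T [l]) \<in> N'"
          using let_[OF l] by blast
        then show "pres_class Y C T [l] \<otimes>\<^bsub>pi1 Y C T\<^esub> y \<otimes>\<^bsub>pi1 Y C T\<^esub> n \<otimes>\<^bsub>pi1 Y C T\<^esub>
          inv\<^bsub>pi1 Y C T\<^esub> (pres_class Y C T [l] \<otimes>\<^bsub>pi1 Y C T\<^esub> y) \<in> N'"
          using G.conj_prod[OF cc y nc] by simp
      qed
    qed
    show "N' \<subseteq> ?N"
    proof
      fix h assume h: "h \<in> N'"
      have hc: "h \<in> carrier (pi1 Y C T)" using h Nc by blast
      show "h \<in> ?N" unfolding Nmem
      proof (intro conjI ballI hc)
        fix g \<sigma> assume g: "g \<in> carrier (pi1 Y C T)" and s: "\<sigma> \<in> sV Y"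
        have "inv\<^bsub>pi1 Y C T\<^esub> g \<otimes>\<^bsub>pi1 Y C T\<^esub> h \<otimes>\<^bsub>pi1 Y C T\<^esub> inv\<^bsub>pi1 Y C T\<^esub> (inv\<^bsub>pi1 Y C T\<^esub> g) \<in> N'"
          using all[of "inv\<^bsub>pi1 Y C T\<^esub> g"] g h by simp
        then have "inv\<^bsub>pi1 Y C T\<^esub> g \<otimes>\<^bsub>pi1 Y C T\<^esub> h \<otimes>\<^bsub>pi1 Y C T\<^esub> g \<in> N'" using g by simp
        then show "inv\<^bsub>pi1 Y C T\<^esub> g \<otimes>\<^bsub>pi1 Y C T\<^esub> h \<otimes>\<^bsub>pi1 Y C T\<^esub> g \<in> ?L \<sigma>" using NL'[OF s] by blast
      qed
    qed
  qed
  show ?thesis using P1 P2 P3 P4 by blast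
qed

end
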